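(* Consider a tranca mínima (as defined in the context). If, at some turn, a player of the losing team passes while the two open ends of the board show two different numbers, both different from $0$, then the losing team places at least one tile during the game.
   Context: Domino tiles: the set of tiles consists of the 28 unordered pairs $[a,b]=[b,a]$ with $a,b\in\{0,1,\dots,6\}$; the number of points (pips) of $[a,b]$ is $a+b$. Four players, numbered 1 to 4, play; players 1 and 3 form one team and players 2 and 4 the other. The 28 tiles are dealt, 7 to each player (the initial hands). Players take turns in cyclic order $1,2,3,4,1,\dots$. The starting player places any one of their tiles on the table, forming a line of tiles (the board) with two open ends. On each subsequent turn, the player whose turn it is must, if they hold a tile containing a number equal to the number shown at one of the two open ends, place such a tile at that end (with equal numbers adjacent), the other number of the tile becoming the new open end; if they hold no such tile, they pass. A game ends either when a player places their last tile, or in a tranca (blocked game): a position in which no player holds a tile that can be placed. In a game ending in a tranca, the team whose two players' remaining tiles have the smaller total number of pips wins, and the other team is the losing team. A tranca mínima is a game ending in a tranca in which the total number of pips on the tiles of the board at the end of the game is $42$. *)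

theory Defs
  imports Main
begin

text \<open>Tiles: an unordered pair [a,b] is represented canonically as (a,b) with a \<le> b.\<close>
type_synonym tile = "nat \<times> nat"

definition all_tiles :: "tile set" where
  "all_tiles = {(a, b). a \<le> b \<and> b \<le> 6}"

definition pips :: "tile \<Rightarrow> nat" where
  "pips t = fst t + snd t"

definition matches :: "tile \<Rightarrow> nat \<Rightarrow> bool" where
  "matches t e \<longleftrightarrow> fst t = e \<or> snd t = e"

definition other :: "tile \<Rightarrow> nat \<Rightarrow> nat" where
  "other t e = (if fst t = e then snd t else fst t)"

datatype side = Left | Right

datatype move = Pass | Place tile side

text \<open>A position: hands of the players (indexed 1..4), the two open ends
  (None before the first tile), and the list of tiles on the board.\<close>
type_synonym position = "(nat \<Rightarrow> tile set) \<times> (nat \<times> nat) option \<times> tile list"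

definition hands :: "position \<Rightarrow> nat \<Rightarrow> tile set" where
  "hands P = fst P"

definition ends :: "position \<Rightarrow> (nat \<times> nat) option" where
  "ends P = fst (snd P)"

definition board :: "position \<Rightarrow> tile list" where
  "board P = snd (snd P)"

text \<open>Player whose turn is the k-th turn (k = 0 is the opening move) when player s starts;
  turns follow the cyclic order 1,2,3,4,1,...\<close>
definition player_at :: "nat \<Rightarrow> nat \<Rightarrow> nat" where
  "player_at s k = ((s - 1 + k) mod 4) + 1"

fun apply_move :: "nat \<Rightarrow> move \<Rightarrow> position \<Rightarrow> position" where
  "apply_move p Pass P = P"
| "apply_move p (Place t sd) (h, None, b) = (h(p := h p - {t}), Some (fst t, snd t), t # b)"
| "apply_move p (Place t Left) (h, Some (x, y), b) = (h(p := h p - {t}), Some (other t x, y), t # b)"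
| "apply_move p (Place t Right) (h, Some (x, y), b) = (h(p := h p - {t}), Some (x, other t y), t # b)"

fun pos :: "(nat \<Rightarrow> tile set) \<Rightarrow> nat \<Rightarrow> move list \<Rightarrow> nat \<Rightarrow> position" where
  "pos h0 s ms 0 = (h0, None, [])"
| "pos h0 s ms (Suc k) = apply_move (player_at s k) (ms ! k) (pos h0 s ms k)"

definition legal :: "nat \<Rightarrow> move \<Rightarrow> position \<Rightarrow> bool" where
  "legal p m P =
    (case ends P of
       None \<Rightarrow> (\<exists>t sd. m = Place t sd \<and> t \<in> hands P p)
     | Some (x, y) \<Rightarrow>
         (if (\<exists>t\<in>hands P p. matches t x \<or> matches t y)
          then (\<exists>t\<in>hands P p. (m = Place t Left \<and> matches t x) \<or> (m = Place t Right \<and> matches t y))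
          else m = Pass))"

definition blocked :: "position \<Rightarrow> bool" where
  "blocked P \<longleftrightarrow>
    (\<exists>x y. ends P = Some (x, y) \<and>
       (\<forall>p\<in>{1..4}. \<forall>t\<in>hands P p. \<not> matches t x \<and> \<not> matches t y))"

definition valid_deal :: "(nat \<Rightarrow> tile set) \<Rightarrow> bool" where
  "valid_deal h0 \<longleftrightarrow>
    (\<forall>p\<in>{1..4}. h0 p \<subseteq> all_tiles \<and> card (h0 p) = 7) \<and>
    (\<forall>p\<in>{1..4}. \<forall>q\<in>{1..4}. p \<noteq> q \<longrightarrow> h0 p \<inter> h0 q = {}) \<and>
    (\<Union>p\<in>{1..4}. h0 p) = all_tiles"

definition tranca_game :: "(nat \<Rightarrow> tile set) \<Rightarrow> nat \<Rightarrow> move list \<Rightarrow> bool" where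
  "tranca_game h0 s ms \<longleftrightarrow>
    valid_deal h0 \<and> s \<in> {1..4} \<and>
    (\<forall>k<length ms.
       legal (player_at s k) (ms ! k) (pos h0 s ms k) \<and>
       \<not> blocked (pos h0 s ms k) \<and>
       (\<forall>p\<in>{1..4}. hands (pos h0 s ms k) p \<noteq> {})) \<and>
    blocked (pos h0 s ms (length ms)) \<and>
    (\<forall>p\<in>{1..4}. hands (pos h0 s ms (length ms)) p \<noteq> {})"

definition tranca_minima :: "(nat \<Rightarrow> tile set) \<Rightarrow> nat \<Rightarrow> move list \<Rightarrow> bool" where
  "tranca_minima h0 s ms \<longleftrightarrow>
    tranca_game h0 s ms \<and> sum_list (map pips (board (pos h0 s ms (length ms)))) = 42"

definition team_pips :: "position \<Rightarrow> nat set \<Rightarrow> nat" where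
  "team_pips P T = (\<Sum>p\<in>T. \<Sum>t\<in>hands P p. pips t)"

definition losing_team :: "(nat \<Rightarrow> tile set) \<Rightarrow> nat \<Rightarrow> move list \<Rightarrow> nat set \<Rightarrow> bool" where
  "losing_team h0 s ms T \<longleftrightarrow>
    (let P = pos h0 s ms (length ms) in
      (T = {1, 3} \<and> team_pips P {1, 3} > team_pips P {2, 4}) \<or>
      (T = {2, 4} \<and> team_pips P {2, 4} > team_pips P {1, 3}))"

end

theory Submission
  imports Defs
begin


definition tl28 :: "tile list" where "tl28 = [(0,0),(0,1),(1,1),(0,2),(1,2),(2,2),(0,3),(1,3),(2,3),(3,3),(0,4),(1,4),(2,4),(3,4),(4,4),(0,5),(1,5),(2,5),(3,5),(4,5),(5,5),(0,6),(1,6),(2,6),(3,6),(4,6),(5,6),(6,6)]"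

lemma le6: "b \<le> (6::nat) \<Longrightarrow> b=0 \<or> b=1 \<or> b=2 \<or> b=3 \<or> b=4 \<or> b=5 \<or> b=6" by linarith

lemma all_tiles_list: "all_tiles = set tl28"
proof -
  have "\<And>a b. (a::nat) \<le> b \<Longrightarrow> b \<le> 6 \<Longrightarrow> (a,b) \<in> set tl28"
    proof -
    fix a b :: nat assume ab: "a \<le> b" "b \<le> 6"
    then have "a \<le> 6" by simp
    from le6[OF this] le6[OF ab(2)] ab(1) show "(a,b) \<in> set tl28"
      unfolding tl28_def by (elim disjE) simp_all
  qed
  moreover have "\<And>a b. (a,b) \<in> set tl28 \<Longrightarrow> (a::nat) \<le> b \<and> b \<le> 6"
    unfolding tl28_def by auto
  ultimately show ?thesis unfolding all_tiles_def by auto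
qed

lemma card_all: "card all_tiles = 28"
  unfolding all_tiles_list tl28_def by (simp add: distinct_card)

definition c :: "tile \<Rightarrow> nat \<Rightarrow> nat" where
  "c t v = (if fst t = v then 1 else 0) + (if snd t = v then 1 else 0)"

lemma sum_c_all: "v \<le> 6 \<Longrightarrow> (\<Sum>t\<in>all_tiles. c t v) = 8"
proof -
  assume "v \<le> 6"
  then have "v = 0 \<or> v = 1 \<or> v = 2 \<or> v = 3 \<or> v = 4 \<or> v = 5 \<or> v = 6" by auto
  then show ?thesis unfolding all_tiles_list
    by (elim disjE; simp add: sum.distinct_set_conv_list c_def tl28_def)
qed

lemma card_E: "e \<le> 6 \<Longrightarrow> card {t\<in>all_tiles. matches t e} = 7"
proof -
  assume "e \<le> 6"
  then have "e = 0 \<or> e = 1 \<or> e = 2 \<or> e = 3 \<or> e = 4 \<or> e = 5 \<or> e = 6" by auto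
  then show ?thesis unfolding all_tiles_list set_filter[symmetric]
    by (elim disjE; simp add: distinct_card matches_def tl28_def)
qed

lemma pips_c: "t \<in> all_tiles \<Longrightarrow> pips t = (\<Sum>v\<le>6. v * c t v)"
  unfolding all_tiles_def pips_def c_def
  by (auto simp: atMost_Suc numeral_eq_Suc le_Suc_eq)

lemma sum_c_t: "t \<in> all_tiles \<Longrightarrow> (\<Sum>v\<le>6. c t v) = 2"
  unfolding all_tiles_def c_def
  by (auto simp: atMost_Suc numeral_eq_Suc le_Suc_eq)



definition cntl :: "tile list \<Rightarrow> nat \<Rightarrow> nat" where
  "cntl b v = sum_list (map (\<lambda>t. c t v) b)"

definition ginv :: "(nat \<Rightarrow> tile set) \<Rightarrow> position \<Rightarrow> bool" where
  "ginv h0 P \<longleftrightarrow> distinct (board P) \<and> set (board P) \<subseteq> all_tiles \<and>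
    (\<forall>p\<in>{1..4}. hands P p = h0 p - set (board P)) \<and>
    (case ends P of None \<Rightarrow> board P = []
     | Some (l, r) \<Rightarrow> l \<le> 6 \<and> r \<le> 6 \<and>
         (\<forall>v. even (cntl (board P) v + (if l = v then 1 else 0) + (if r = v then 1 else 0))))"

lemma am_board: "board (apply_move p (Place t sd) P) = t # board P"
  by (cases P; cases "fst (snd P)"; cases sd; auto simp: board_def)

lemma am_hands: "hands (apply_move p (Place t sd) P) = (hands P)(p := hands P p - {t})"
  by (cases P; cases "fst (snd P)"; cases sd; auto simp: hands_def)

lemma legal_place: "legal p (Place t sd) P \<Longrightarrow> t \<in> hands P p"
  unfolding legal_def by (auto split: option.splits if_splits)

lemma legal_pass: "legal p Pass P \<Longrightarrow> ends P = Some (x, y) \<Longrightarrow> t \<in> hands P p \<Longrightarrow>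
   \<not> matches t x \<and> \<not> matches t y"
  unfolding legal_def by (auto split: option.splits if_splits)

lemma player_range: "player_at s k \<in> {1..4}"
  unfolding player_at_def by auto

lemma tile_bound: "t \<in> all_tiles \<Longrightarrow> fst t \<le> 6 \<and> snd t \<le> 6"
  unfolding all_tiles_def by auto

lemma par_step:
  assumes "matches t x" "even (n + (if x = v then 1 else 0) + (if y = v then 1 else (0::nat)))"
  shows "even (c t v + n + (if other t x = v then 1 else 0) + (if y = v then 1 else 0))"
proof -
  obtain a b where t: "t = (a,b)" by (cases t)
  show ?thesis using assms unfolding t c_def other_def matches_def
    by (cases "a = x"; cases "b = v"; cases "x = v"; cases "a = v"; cases "y = v"; simp)
qed

lemma inv_step:
  assumes vd: "valid_deal h0" and p: "p \<in> {1..4}" and I: "ginv h0 P" and L: "legal p m P"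
  shows "ginv h0 (apply_move p m P)"
proof (cases m)
  case Pass then show ?thesis using I by simp
next
  case (Place t sd)
  have tin: "t \<in> hands P p" using L Place legal_place by simp
  have hp: "hands P p = h0 p - set (board P)" using I p unfolding ginv_def by auto
  have t0: "t \<in> h0 p" "t \<notin> set (board P)" using tin hp by auto
  have tall: "t \<in> all_tiles" using vd p t0 unfolding valid_deal_def by auto
  have disj: "\<forall>q\<in>{1..4}. q \<noteq> p \<longrightarrow> t \<notin> h0 q" using vd p t0 unfolding valid_deal_def by blast
  have A: "distinct (board (apply_move p m P))" using I t0 Place am_board unfolding ginv_def by auto
  have B: "set (board (apply_move p m P)) \<subseteq> all_tiles" using I tall Place am_board unfolding ginv_def by auto
  have C: "\<forall>q\<in>{1..4}. hands (apply_move p m P) q = h0 q - set (board (apply_move p m P))"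
    using I disj Place am_board am_hands hp unfolding ginv_def by auto
  have D: "case ends (apply_move p m P) of None \<Rightarrow> board (apply_move p m P) = []
     | Some (l, r) \<Rightarrow> l \<le> 6 \<and> r \<le> 6 \<and>
         (\<forall>v. even (cntl (board (apply_move p m P)) v + (if l = v then 1 else 0) + (if r = v then 1 else 0)))"
  proof (cases "ends P")
    case None
    obtain h b where P: "P = (h, None, b)" using None unfolding ends_def by (cases P) auto
    have "b = []" using I unfolding ginv_def P by (auto simp: ends_def board_def)
    then show ?thesis using tile_bound[OF tall] unfolding P Place
      by (auto simp: ends_def board_def cntl_def c_def)
  next
    case (Some e)
    obtain x y where e: "e = (x,y)" by (cases e)
    obtain h b where P: "P = (h, Some (x,y), b)" using Some e unfolding ends_def by (cases P) auto
    have xy: "x \<le> 6" "y \<le> 6" "\<forall>v. even (cntl b v + (if x = v then 1 else 0) + (if y = v then 1 else 0))"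
      using I unfolding ginv_def P by (auto simp: ends_def board_def)
    have Lx: "(sd = Left \<and> matches t x) \<or> (sd = Right \<and> matches t y)"
      using L unfolding Place legal_def P by (auto simp: ends_def hands_def split: if_splits)
    show ?thesis
    proof (cases sd)
      case Left
      then have mt: "matches t x" using Lx by auto
      have o6: "other t x \<le> 6" using tile_bound[OF tall] unfolding other_def by auto
      have "\<forall>v. even (cntl (t # b) v + (if other t x = v then 1 else 0) + (if y = v then 1 else 0))"
        using par_step[OF mt] xy(3) by (simp add: cntl_def)
      then show ?thesis using o6 xy unfolding P Place Left
        by (simp add: ends_def board_def)
    next
      case Right
      then have mt: "matches t y" using Lx by auto
      have o6: "other t y \<le> 6" using tile_bound[OF tall] unfolding other_def by auto
      have "\<forall>v. even (cntl (t # b) v + (if x = v then 1 else 0) + (if other t y = v then 1 else 0))"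
      proof
        fix v
        have "even (cntl b v + (if y = v then 1 else 0) + (if x = v then 1 else 0))"
          using xy(3) by (simp add: ac_simps)
        from par_step[OF mt this] show "even (cntl (t # b) v + (if x = v then 1 else 0) + (if other t y = v then 1 else 0))"
          by (simp add: cntl_def ac_simps)
      qed
      then show ?thesis using o6 xy unfolding P Place Right
        by (simp add: ends_def board_def)
    qed
  qed
  show ?thesis using A B C D unfolding ginv_def by blast
qed



lemma inv_pos: "tranca_game h0 s ms \<Longrightarrow> k \<le> length ms \<Longrightarrow> ginv h0 (pos h0 s ms k)"
proof (induction k)
  case 0 then show ?case by (simp add: ginv_def board_def hands_def ends_def)
next
  case (Suc k)
  have kl: "k < length ms" using Suc.prems by simp
  have I: "ginv h0 (pos h0 s ms k)" using Suc by simp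
  have L: "legal (player_at s k) (ms ! k) (pos h0 s ms k)"
    using Suc.prems(1) kl unfolding tranca_game_def by blast
  have vd: "valid_deal h0" using Suc.prems(1) unfolding tranca_game_def by blast
  show ?case using inv_step[OF vd player_range I L] by simp
qed

lemma T_board:
  assumes G: "tranca_game h0 s ms" and TS: "T \<subseteq> {1..4}"
    and HT: "\<forall>j<length ms. player_at s j \<in> T \<longrightarrow> ms ! j = Pass"
    and pT: "p \<in> T"
  shows "k \<le> length ms \<Longrightarrow> set (board (pos h0 s ms k)) \<inter> h0 p = {}"
proof (induction k)
  case 0 then show ?case by (simp add: board_def)
next
  case (Suc k)
  then have IH: "set (board (pos h0 s ms k)) \<inter> h0 p = {}" by simp
  have kl: "k < length ms" using Suc by simp
  show ?case
  proof (cases "ms ! k")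
    case Pass then show ?thesis using IH by simp
  next
    case (Place t sd)
    let ?p0 = "player_at s k"
    have nT: "?p0 \<notin> T" using HT kl Place by auto
    have L: "legal ?p0 (ms ! k) (pos h0 s ms k)" using G kl unfolding tranca_game_def by auto
    have tin: "t \<in> hands (pos h0 s ms k) ?p0" using L Place legal_place by simp
    have I: "ginv h0 (pos h0 s ms k)" using inv_pos G kl by simp
    have "t \<in> h0 ?p0" using tin I player_range unfolding ginv_def by blast
    moreover have "?p0 \<noteq> p" "?p0 \<in> {1..4}" "p \<in> {1..4}" using nT pT TS player_range by auto
    ultimately have "t \<notin> h0 p" using G unfolding tranca_game_def valid_deal_def by blast
    then show ?thesis using IH Place am_board by simp
  qed
qed

lemma arith6: "(c1::nat) \<ge> 2 \<Longrightarrow> c2 \<ge> 2 \<Longrightarrow> c3 \<ge> 2 \<Longrightarrow> c4 \<ge> 2 \<Longrightarrow> c5 \<ge> 2 \<Longrightarrow> c6 \<ge> 2 \<Longrightarrow> c1 + 2*c2 + 3*c3+4*c4+5*c5+6*c6 = 42 \<Longrightarrow> c1 = 2 \<and> c2 = 2 \<and> c3 = 2 \<and> c4 = 2 \<and> c5 = 2 \<and> c6 = 2"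
  by simp

lemma final_board:
  assumes M: "tranca_minima h0 s ms"
  shows "ends (pos h0 s ms (length ms)) = Some (0,0) \<and>
     (\<forall>e\<in>{1..6}. card (set (board (pos h0 s ms (length ms))) \<union> {t\<in>all_tiles. matches t e}) \<ge> 15)"
proof -
  let ?P = "pos h0 s ms (length ms)"
  let ?B = "set (board ?P)"
  define cnt where "cnt v = (\<Sum>t\<in>?B. c t v)" for v
  have G: "tranca_game h0 s ms" using M unfolding tranca_minima_def by simp
  have vd: "valid_deal h0" using G unfolding tranca_game_def by simp
  have I: "ginv h0 ?P" using inv_pos G by simp
  have dist: "distinct (board ?P)" and Bsub: "?B \<subseteq> all_tiles"
    and hands: "\<forall>p\<in>{1..4}. hands ?P p = h0 p - ?B" using I unfolding ginv_def by auto
  have fin: "finite ?B" by simp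
  obtain a b where ab: "ends ?P = Some (a,b)" and
    blk: "\<forall>p\<in>{1..4}. \<forall>t\<in>hands ?P p. \<not> matches t a \<and> \<not> matches t b"
    using G unfolding tranca_game_def blocked_def by auto
  have a6: "a \<le> 6" and par: "\<forall>v. even (cnt v + (if a = v then 1 else 0) + (if b = v then 1 else 0))"
    using I ab unfolding ginv_def cnt_def cntl_def by (auto simp: sum_list_distinct_conv_sum_set[OF dist])
  have Ain: "\<And>t. t \<in> all_tiles \<Longrightarrow> matches t a \<Longrightarrow> t \<in> ?B"
  proof (rule ccontr)
    fix t assume t: "t \<in> all_tiles" "matches t a" "t \<notin> ?B"
    then obtain p where p: "p \<in> {1..4}" "t \<in> h0 p" using vd unfolding valid_deal_def by blast
    then have "t \<in> hands ?P p" using hands t by auto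
    then show False using blk p t by blast
  qed
  have cnta: "cnt a = 8"
  proof -
    have "cnt a = (\<Sum>t\<in>all_tiles. c t a)" unfolding cnt_def
    proof (rule sum.mono_neutral_left)
      show "finite all_tiles" unfolding all_tiles_list by simp
      show "?B \<subseteq> all_tiles" by fact
      show "\<forall>i\<in>all_tiles - ?B. c i a = 0"
        using Ain unfolding c_def matches_def by auto
    qed
    then show ?thesis using sum_c_all a6 by simp
  qed
  have ba: "b = a" using par[rule_format, of a] cnta by (auto split: if_splits)
  have ev: "\<And>v. even (cnt v)" 
  proof -
    fix v show "even (cnt v)" using par[rule_format, of v] ba by (cases "a = v") auto
  qed
  have ge2: "\<And>v. v \<le> 6 \<Longrightarrow> v \<noteq> a \<Longrightarrow> cnt v \<ge> 2"
  proof -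
    fix v assume v: "v \<le> 6" "v \<noteq> a"
    let ?t = "(min a v, max a v)"
    have "?t \<in> all_tiles" using v a6 unfolding all_tiles_def by auto
    moreover have "matches ?t a" unfolding matches_def by auto
    ultimately have tB: "?t \<in> ?B" using Ain by blast
    have "1 \<le> c ?t v" unfolding c_def by auto
    also have "c ?t v \<le> cnt v" unfolding cnt_def using tB fin by (intro member_le_sum) auto
    finally have "1 \<le> cnt v" .
    then show "cnt v \<ge> 2" using ev[of v] by presburger
  qed
  have pipsum: "(\<Sum>v\<le>6. v * cnt v) = 42"
  proof -
    have "42 = sum_list (map pips (board ?P))" using M unfolding tranca_minima_def by simp
    also have "\<dots> = (\<Sum>t\<in>?B. pips t)" by (simp add: sum_list_distinct_conv_sum_set[OF dist])
    also have "\<dots> = (\<Sum>t\<in>?B. \<Sum>v\<le>6. v * c t v)" using Bsub pips_c by (intro sum.cong) auto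
    also have "\<dots> = (\<Sum>v\<le>6. \<Sum>t\<in>?B. v * c t v)" by (rule sum.swap)
    also have "\<dots> = (\<Sum>v\<le>6. v * cnt v)" unfolding cnt_def by (simp add: sum_distrib_left)
    finally show ?thesis by simp
  qed
  have cntsum: "(\<Sum>v\<le>6. cnt v) = 2 * card ?B"
  proof -
    have "(\<Sum>v\<le>6. cnt v) = (\<Sum>t\<in>?B. \<Sum>v\<le>6. c t v)" unfolding cnt_def by (rule sum.swap)
    also have "\<dots> = (\<Sum>t\<in>?B. 2)" using Bsub sum_c_t by (intro sum.cong) auto
    finally show ?thesis by simp
  qed
  have exp1: "(\<Sum>v\<le>6. v * cnt v) = cnt 1 + 2 * cnt 2 + 3 * cnt 3 + 4 * cnt 4 + 5 * cnt 5 + 6 * cnt 6"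
    by (simp add: atMost_Suc numeral_eq_Suc)
  have exp2: "(\<Sum>v\<le>6. cnt v) = cnt 0 + cnt 1 + cnt 2 + cnt 3 + cnt 4 + cnt 5 + cnt 6"
    by (simp add: atMost_Suc numeral_eq_Suc)
  have ge2': "\<And>v. v \<le> 6 \<Longrightarrow> cnt v \<ge> 2"
  proof -
    fix v :: nat assume "v \<le> 6" then show "cnt v \<ge> 2" using ge2 cnta by (cases "v = a") auto
  qed
  have g: "cnt 1 \<ge> 2" "cnt 2 \<ge> 2" "cnt 3 \<ge> 2" "cnt 4 \<ge> 2" "cnt 5 \<ge> 2" "cnt 6 \<ge> 2"
    using ge2' by simp_all
  have e6: "cnt 1 = 2" "cnt 2 = 2" "cnt 3 = 2" "cnt 4 = 2" "cnt 5 = 2" "cnt 6 = 2"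
    using arith6[OF g] pipsum exp1 by simp_all
  have a0: "a = 0"
  proof (rule ccontr)
    assume "a \<noteq> 0"
    then have "a = 1 \<or> a = 2 \<or> a = 3 \<or> a = 4 \<or> a = 5 \<or> a = 6" using a6 by auto
    then show False using e6 cnta by auto
  qed
  have c2: "\<And>e. e \<in> {1..6} \<Longrightarrow> cnt e = 2"
  proof -
    fix e :: nat assume "e \<in> {1..6}"
    then have "e = 1 \<or> e = 2 \<or> e = 3 \<or> e = 4 \<or> e = 5 \<or> e = 6" by auto
    then show "cnt e = 2" using e6 by auto
  qed
  have cardB: "card ?B = 10" using e6 cntsum exp2 cnta a0 by simp
  have "\<forall>e\<in>{1..6}. card (?B \<union> {t\<in>all_tiles. matches t e}) \<ge> 15"
  proof
    fix e :: nat assume e: "e \<in> {1..6}"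
    let ?E = "{t\<in>all_tiles. matches t e}"
    have finE: "finite ?E" unfolding all_tiles_list by simp
    have cE: "card ?E = 7" using card_E e by simp
    have "card (?B \<inter> ?E) = (\<Sum>t\<in>?B \<inter> ?E. 1)" by simp
    also have "\<dots> \<le> (\<Sum>t\<in>?B \<inter> ?E. c t e)" by (rule sum_mono) (auto simp: c_def matches_def)
    also have "\<dots> \<le> cnt e" unfolding cnt_def by (rule sum_mono2) auto
    finally have "card (?B \<inter> ?E) \<le> 2" using c2 e by simp
    moreover have "card (?B \<union> ?E) + card (?B \<inter> ?E) = card ?B + card ?E"
      using card_Un_Int[OF fin finE] by simp
    ultimately show "card (?B \<union> ?E) \<ge> 15" using cardB cE by simp
  qed
  then show ?thesis using ab ba a0 by simp
qed



lemma partner: "player_at s (Suc (Suc k)) = (if player_at s k \<le> 2 then player_at s k + 2 else player_at s k - 2)"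
proof -
  define m where "m = (s - 1 + k) mod 4"
  have m4: "m < 4" unfolding m_def by simp
  have "(s - 1 + Suc (Suc k)) mod 4 = (m + 2) mod 4" unfolding m_def
    using mod_add_left_eq[of "s - 1 + k" 4 2] by (simp add: add_ac)
  then have "player_at s (Suc (Suc k)) = (m + 2) mod 4 + 1" "player_at s k = m + 1"
    unfolding player_at_def m_def by simp_all
  moreover have "m = 0 \<or> m = 1 \<or> m = 2 \<or> m = 3" using m4 by auto
  ultimately show ?thesis by auto
qed

lemma tg_step: "tranca_game h0 s ms \<Longrightarrow> j < length ms \<Longrightarrow>
   legal (player_at s j) (ms!j) (pos h0 s ms j) \<and> \<not> blocked (pos h0 s ms j)"
  unfolding tranca_game_def by blast

lemma tg_final: "tranca_game h0 s ms \<Longrightarrow> blocked (pos h0 s ms (length ms))"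
  unfolding tranca_game_def by blast

theorem mainTheorem6:
  fixes h0 :: "nat \<Rightarrow> tile set" and s :: nat and ms :: "move list"
    and T :: "nat set" and k x y :: nat
  assumes "tranca_minima h0 s ms"
    and "losing_team h0 s ms T"
    and "k < length ms"
    and "player_at s k \<in> T"
    and "ms ! k = Pass"
    and "ends (pos h0 s ms k) = Some (x, y)"
    and "x \<noteq> y" and "x \<noteq> 0" and "y \<noteq> 0"
  shows "\<exists>j<length ms. player_at s j \<in> T \<and> (\<exists>t sd. ms ! j = Place t sd)"
proof (rule ccontr)
  assume N: "\<not> ?thesis"
  note M = assms(1) and kl = assms(3) and pT = assms(4) and mk = assms(5) and exy = assms(6)
  have HT: "\<forall>j<length ms. player_at s j \<in> T \<longrightarrow> ms ! j = Pass"
  proof (intro allI impI)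
    fix j assume "j < length ms" "player_at s j \<in> T"
    then show "ms ! j = Pass" using N by (cases "ms ! j") auto
  qed
  have G: "tranca_game h0 s ms" using M unfolding tranca_minima_def by simp
  have vd: "valid_deal h0" using G unfolding tranca_game_def by simp
  have Tc: "T = {1,3} \<or> T = {2,4}" using assms(2) unfolding losing_team_def Let_def by auto
  then have TS: "T \<subseteq> {1..4}" by auto
  define p where "p = player_at s k"
  define q where "q = player_at s (Suc (Suc k))"
  have qT: "q \<in> T" and pq: "p \<noteq> q" using Tc pT unfolding q_def p_def partner by auto
  have p4: "p \<in> {1..4}" and q4: "q \<in> {1..4}" using player_range p_def q_def by auto
  have handsT: "\<And>j r. j \<le> length ms \<Longrightarrow> r \<in> T \<Longrightarrow> hands (pos h0 s ms j) r = h0 r"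
  proof -
    fix j r assume j: "j \<le> length ms" and r: "r \<in> T"
    have "ginv h0 (pos h0 s ms j)" using inv_pos G j by simp
    then have "hands (pos h0 s ms j) r = h0 r - set (board (pos h0 s ms j))"
      using r TS unfolding ginv_def by auto
    then show "hands (pos h0 s ms j) r = h0 r" using T_board[OF G TS HT r j] by auto
  qed
  have Lk: "legal p Pass (pos h0 s ms k)" using tg_step[OF G kl] mk unfolding p_def by simp
  have pno: "\<And>t. t \<in> h0 p \<Longrightarrow> \<not> matches t x \<and> \<not> matches t y"
    using legal_pass[OF Lk exy] handsT[of k p] kl pT p_def by auto
  have Ik: "ginv h0 (pos h0 s ms k)" using inv_pos G kl by simp
  have xy6: "x \<le> 6" "y \<le> 6" using Ik exy unfolding ginv_def by auto
  have ps1: "pos h0 s ms (Suc k) = pos h0 s ms k" using mk by simp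
  have k1: "Suc k < length ms"
  proof (rule ccontr)
    assume "\<not> Suc k < length ms"
    then have "Suc k = length ms" using kl by simp
    then have "blocked (pos h0 s ms k)" using tg_final[OF G] ps1 by metis
    then show False using tg_step[OF G kl] by blast
  qed
  define P2 where "P2 = pos h0 s ms (Suc (Suc k))"
  have P2eq: "P2 = apply_move (player_at s (Suc k)) (ms ! Suc k) (pos h0 s ms k)"
    unfolding P2_def using ps1 by simp
  obtain hh bb where Pk: "pos h0 s ms k = (hh, Some (x,y), bb)"
    using exy unfolding ends_def by (cases "pos h0 s ms k") auto
  obtain e z where e: "e = x \<or> e = y" and ez: "ends P2 = Some (e,z) \<or> ends P2 = Some (z,e)"
  proof (cases "ms ! Suc k")
    case Pass
    then have "ends P2 = Some (x,y)" using P2eq exy by simp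
    then show ?thesis using that by blast
  next
    case (Place t sd)
    show ?thesis
    proof (cases sd)
      case Left
      then have "ends P2 = Some (other t x, y)" using P2eq Pk Place by (simp add: ends_def)
      then show ?thesis using that by blast
    next
      case Right
      then have "ends P2 = Some (x, other t y)" using P2eq Pk Place by (simp add: ends_def)
      then show ?thesis using that by blast
    qed
  qed
  have e16: "e \<in> {1..6}" using e xy6 assms(8,9) by auto
  have fb: "ends (pos h0 s ms (length ms)) = Some (0,0)"
    and big: "card (set (board (pos h0 s ms (length ms))) \<union> {t\<in>all_tiles. matches t e}) \<ge> 15"
    using final_board[OF M] e16 by auto
  have k2: "Suc (Suc k) < length ms"
  proof (rule ccontr)
    assume "\<not> Suc (Suc k) < length ms"
    then have "Suc (Suc k) = length ms" using k1 by simp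
    then have "ends P2 = Some (0,0)" using fb P2_def by simp
    then show False using ez e16 by auto
  qed
  have "ms ! Suc (Suc k) = Pass" using HT k2 qT q_def by blast
  then have L2: "legal q Pass P2" using tg_step[OF G k2] unfolding q_def P2_def by simp
  have qno: "\<And>t. t \<in> h0 q \<Longrightarrow> \<not> matches t e"
  proof -
    fix t assume t: "t \<in> h0 q"
    then have th: "t \<in> hands P2 q" using handsT[of "Suc (Suc k)" q] k2 qT P2_def by auto
    show "\<not> matches t e" using ez legal_pass[OF L2 _ th] by auto
  qed
  let ?B = "set (board (pos h0 s ms (length ms)))"
  let ?E = "{t\<in>all_tiles. matches t e}"
  have I: "ginv h0 (pos h0 s ms (length ms))" using inv_pos G by simp
  have sub: "?B \<union> ?E \<subseteq> all_tiles - (h0 p \<union> h0 q)"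
  proof -
    have "?B \<subseteq> all_tiles" using I unfolding ginv_def by auto
    moreover have "?B \<inter> h0 p = {}" "?B \<inter> h0 q = {}"
      using T_board[OF G TS HT] pT qT p_def by auto
    moreover have "?E \<inter> h0 p = {}" using pno e by auto
    moreover have "?E \<inter> h0 q = {}" using qno by auto
    ultimately show ?thesis by blast
  qed
  have finA: "finite all_tiles" unfolding all_tiles_list by simp
  have hp: "h0 p \<subseteq> all_tiles" "card (h0 p) = 7" "h0 q \<subseteq> all_tiles" "card (h0 q) = 7"
    "h0 p \<inter> h0 q = {}" using vd p4 q4 pq unfolding valid_deal_def by auto
  have finp: "finite (h0 p)" "finite (h0 q)" using hp finA finite_subset by auto
  have "card (h0 p \<union> h0 q) = 14" using card_Un_disjoint[OF finp hp(5)] hp by simp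
  then have "card (all_tiles - (h0 p \<union> h0 q)) = 14"
    using card_Diff_subset[OF finite_UnI[OF finp]] hp card_all by simp
  then have "card (?B \<union> ?E) \<le> 14" using card_mono[OF _ sub] finA by simp
  then show False using big by simp
qed

end
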